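(* Let $\mathcal D$ be a semicartesian symmetric monoidal category and $X$ an object. The following are equivalent: (1) $X$ admits broadcasting, i.e. there is a morphism $b_X\colon X\to X\otimes X$ with $(\mathrm{id}_X\otimes\mathrm{del}_X)\circ b_X=\mathrm{id}_X$ and $(\mathrm{del}_X\otimes\mathrm{id}_X)\circ b_X=\mathrm{id}_X$. (2) The discard morphism $\mathrm{del}_X\colon X\to I$ is non-creative.
   Context: A symmetric monoidal category $(\mathcal D,\otimes,I)$ is semicartesian if $I$ is terminal; $\mathrm{del}_X\colon X\to I$ denotes the unique morphism (unitors suppressed). A dilation of $p\colon A\to X$ is a morphism $\pi\colon A\to X\otimes E$ (for some object $E$) with $(\mathrm{id}_X\otimes\mathrm{del}_E)\circ\pi=p$. A morphism $p\colon A\to X$ is non-creative if every dilation $\pi\colon A\to X\otimes E$ of $p$ equals $(p\otimes\mathrm{id}_E)\circ\iota$ for some dilation $\iota\colon A\to A\otimes E$ of $\mathrm{id}_A$. *)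

theory Defs
  imports Main
begin

text \<open>A symmetric monoidal category presented by explicit data: objects of type 'o
  (those in Ob), morphisms of type 'm (those in Mor), with domain/codomain, identities,
  composition (Comp g f = g after f), tensor on objects and morphisms, unit object,
  associator, left/right unitors and symmetry.\<close>

record ('o, 'm) smc_data =
  Ob :: "'o set"
  Mor :: "'m set"
  Dom :: "'m \<Rightarrow> 'o"
  Cod :: "'m \<Rightarrow> 'o"
  Id :: "'o \<Rightarrow> 'm"
  Comp :: "'m \<Rightarrow> 'm \<Rightarrow> 'm"
  TensO :: "'o \<Rightarrow> 'o \<Rightarrow> 'o"
  TensM :: "'m \<Rightarrow> 'm \<Rightarrow> 'm"
  Unit :: "'o"
  Assoc :: "'o \<Rightarrow> 'o \<Rightarrow> 'o \<Rightarrow> 'm"   \<comment> \<open>(X \<otimes> Y) \<otimes> Z \<rightarrow> X \<otimes> (Y \<otimes> Z)\<close>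
  LUnit :: "'o \<Rightarrow> 'm"    \<comment> \<open>I \<otimes> X \<rightarrow> X\<close>
  RUnit :: "'o \<Rightarrow> 'm"    \<comment> \<open>X \<otimes> I \<rightarrow> X\<close>
  Sym :: "'o \<Rightarrow> 'o \<Rightarrow> 'm"      \<comment> \<open>X \<otimes> Y \<rightarrow> Y \<otimes> X\<close>

definition hom :: "('o, 'm, 'z) smc_data_scheme \<Rightarrow> 'o \<Rightarrow> 'o \<Rightarrow> 'm set" where
  "hom S A B = {f \<in> Mor S. Dom S f = A \<and> Cod S f = B}"

definition is_iso :: "('o, 'm, 'z) smc_data_scheme \<Rightarrow> 'm \<Rightarrow> bool" where
  "is_iso S f \<longleftrightarrow> f \<in> Mor S \<and> (\<exists>g \<in> hom S (Cod S f) (Dom S f).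
      Comp S g f = Id S (Dom S f) \<and> Comp S f g = Id S (Cod S f))"

locale semicartesian_smc =
  fixes S :: "('o, 'm, 'z) smc_data_scheme"
  assumes dom_ob: "f \<in> Mor S \<Longrightarrow> Dom S f \<in> Ob S"
    and cod_ob: "f \<in> Mor S \<Longrightarrow> Cod S f \<in> Ob S"
    and id_hom: "X \<in> Ob S \<Longrightarrow> Id S X \<in> hom S X X"
    and comp_hom: "\<lbrakk>f \<in> Mor S; g \<in> Mor S; Cod S f = Dom S g\<rbrakk>
        \<Longrightarrow> Comp S g f \<in> hom S (Dom S f) (Cod S g)"
    and comp_id_left: "f \<in> Mor S \<Longrightarrow> Comp S (Id S (Cod S f)) f = f"
    and comp_id_right: "f \<in> Mor S \<Longrightarrow> Comp S f (Id S (Dom S f)) = f"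
    and comp_assoc: "\<lbrakk>f \<in> Mor S; g \<in> Mor S; h \<in> Mor S; Cod S f = Dom S g; Cod S g = Dom S h\<rbrakk>
        \<Longrightarrow> Comp S h (Comp S g f) = Comp S (Comp S h g) f"
    and unit_ob: "Unit S \<in> Ob S"
    and tens_ob: "\<lbrakk>X \<in> Ob S; Y \<in> Ob S\<rbrakk> \<Longrightarrow> TensO S X Y \<in> Ob S"
    and tens_hom: "\<lbrakk>f \<in> Mor S; g \<in> Mor S\<rbrakk> \<Longrightarrow>
        TensM S f g \<in> hom S (TensO S (Dom S f) (Dom S g)) (TensO S (Cod S f) (Cod S g))"
    and tens_id: "\<lbrakk>X \<in> Ob S; Y \<in> Ob S\<rbrakk> \<Longrightarrow> TensM S (Id S X) (Id S Y) = Id S (TensO S X Y)"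
    and tens_comp: "\<lbrakk>f \<in> Mor S; g \<in> Mor S; f' \<in> Mor S; g' \<in> Mor S;
        Cod S f = Dom S g; Cod S f' = Dom S g'\<rbrakk> \<Longrightarrow>
        TensM S (Comp S g f) (Comp S g' f') = Comp S (TensM S g g') (TensM S f f')"
    and assoc_hom: "\<lbrakk>X \<in> Ob S; Y \<in> Ob S; Z \<in> Ob S\<rbrakk> \<Longrightarrow>
        Assoc S X Y Z \<in> hom S (TensO S (TensO S X Y) Z) (TensO S X (TensO S Y Z))"
    and assoc_iso: "\<lbrakk>X \<in> Ob S; Y \<in> Ob S; Z \<in> Ob S\<rbrakk> \<Longrightarrow> is_iso S (Assoc S X Y Z)"
    and assoc_nat: "\<lbrakk>f \<in> Mor S; g \<in> Mor S; h \<in> Mor S\<rbrakk> \<Longrightarrow>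
        Comp S (Assoc S (Cod S f) (Cod S g) (Cod S h)) (TensM S (TensM S f g) h)
        = Comp S (TensM S f (TensM S g h)) (Assoc S (Dom S f) (Dom S g) (Dom S h))"
    and lunit_hom: "X \<in> Ob S \<Longrightarrow> LUnit S X \<in> hom S (TensO S (Unit S) X) X"
    and lunit_iso: "X \<in> Ob S \<Longrightarrow> is_iso S (LUnit S X)"
    and lunit_nat: "f \<in> Mor S \<Longrightarrow>
        Comp S (LUnit S (Cod S f)) (TensM S (Id S (Unit S)) f) = Comp S f (LUnit S (Dom S f))"
    and runit_hom: "X \<in> Ob S \<Longrightarrow> RUnit S X \<in> hom S (TensO S X (Unit S)) X"
    and runit_iso: "X \<in> Ob S \<Longrightarrow> is_iso S (RUnit S X)"
    and runit_nat: "f \<in> Mor S \<Longrightarrow>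
        Comp S (RUnit S (Cod S f)) (TensM S f (Id S (Unit S))) = Comp S f (RUnit S (Dom S f))"
    and pentagon: "\<lbrakk>W \<in> Ob S; X \<in> Ob S; Y \<in> Ob S; Z \<in> Ob S\<rbrakk> \<Longrightarrow>
        Comp S (Assoc S W X (TensO S Y Z)) (Assoc S (TensO S W X) Y Z)
        = Comp S (TensM S (Id S W) (Assoc S X Y Z))
            (Comp S (Assoc S W (TensO S X Y) Z) (TensM S (Assoc S W X Y) (Id S Z)))"
    and triangle: "\<lbrakk>X \<in> Ob S; Y \<in> Ob S\<rbrakk> \<Longrightarrow>
        Comp S (TensM S (Id S X) (LUnit S Y)) (Assoc S X (Unit S) Y)
        = TensM S (RUnit S X) (Id S Y)"
    and sym_hom: "\<lbrakk>X \<in> Ob S; Y \<in> Ob S\<rbrakk> \<Longrightarrow> Sym S X Y \<in> hom S (TensO S X Y) (TensO S Y X)"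
    and sym_nat: "\<lbrakk>f \<in> Mor S; g \<in> Mor S\<rbrakk> \<Longrightarrow>
        Comp S (Sym S (Cod S f) (Cod S g)) (TensM S f g)
        = Comp S (TensM S g f) (Sym S (Dom S f) (Dom S g))"
    and sym_inv: "\<lbrakk>X \<in> Ob S; Y \<in> Ob S\<rbrakk> \<Longrightarrow>
        Comp S (Sym S Y X) (Sym S X Y) = Id S (TensO S X Y)"
    and hexagon: "\<lbrakk>X \<in> Ob S; Y \<in> Ob S; Z \<in> Ob S\<rbrakk> \<Longrightarrow>
        Comp S (Assoc S Y Z X) (Comp S (Sym S X (TensO S Y Z)) (Assoc S X Y Z))
        = Comp S (TensM S (Id S Y) (Sym S X Z))
            (Comp S (Assoc S Y X Z) (TensM S (Sym S X Y) (Id S Z)))"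
    and unit_terminal: "X \<in> Ob S \<Longrightarrow> \<exists>!f. f \<in> hom S X (Unit S)"

definition del :: "('o, 'm, 'z) smc_data_scheme \<Rightarrow> 'o \<Rightarrow> 'm" where
  "del S X = (THE f. f \<in> hom S X (Unit S))"

text \<open>A dilation \<pi> : A \<rightarrow> X \<otimes> E of p : A \<rightarrow> X, where (id_X \<otimes> del_E) \<circ> \<pi> = p,
  with the right unitor X \<otimes> I \<cong> X written explicitly.\<close>
definition dilation :: "('o, 'm, 'z) smc_data_scheme \<Rightarrow> 'm \<Rightarrow> 'o \<Rightarrow> 'm \<Rightarrow> bool" where
  "dilation S p E \<pi> \<longleftrightarrow> p \<in> Mor S \<and> E \<in> Ob S \<and>
     \<pi> \<in> hom S (Dom S p) (TensO S (Cod S p) E) \<and>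
     Comp S (RUnit S (Cod S p)) (Comp S (TensM S (Id S (Cod S p)) (del S E)) \<pi>) = p"

definition non_creative :: "('o, 'm, 'z) smc_data_scheme \<Rightarrow> 'm \<Rightarrow> bool" where
  "non_creative S p \<longleftrightarrow> p \<in> Mor S \<and>
     (\<forall>E \<in> Ob S. \<forall>\<pi>. dilation S p E \<pi> \<longrightarrow>
        (\<exists>\<iota>. dilation S (Id S (Dom S p)) E \<iota> \<and> \<pi> = Comp S (TensM S p (Id S E)) \<iota>))"

definition admits_broadcasting :: "('o, 'm, 'z) smc_data_scheme \<Rightarrow> 'o \<Rightarrow> bool" where
  "admits_broadcasting S X \<longleftrightarrow> (\<exists>b \<in> hom S X (TensO S X X).
     Comp S (RUnit S X) (Comp S (TensM S (Id S X) (del S X)) b) = Id S X \<and>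
     Comp S (LUnit S X) (Comp S (TensM S (del S X) (Id S X)) b) = Id S X)"

end

theory Submission
  imports Defs
begin

context semicartesian_smc
begin

lemma homI: "f \<in> hom S A B \<Longrightarrow> f \<in> Mor S \<and> Dom S f = A \<and> Cod S f = B"
  by (simp add: hom_def)

lemma del_hom: "X \<in> Ob S \<Longrightarrow> del S X \<in> hom S X (Unit S)"
  unfolding del_def by (rule theI'[OF unit_terminal])

lemma del_unique: "X \<in> Ob S \<Longrightarrow> f \<in> hom S X (Unit S) \<Longrightarrow> f = del S X"
  using unit_terminal del_hom by blast

lemma comp_in: "f \<in> hom S A B \<Longrightarrow> g \<in> hom S B C \<Longrightarrow> Comp S g f \<in> hom S A C"
  using comp_hom by (simp add: hom_def)

lemma tens_in: "f \<in> hom S A B \<Longrightarrow> g \<in> hom S C D \<Longrightarrow> TensM S f g \<in> hom S (TensO S A C) (TensO S B D)"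
  using tens_hom by (simp add: hom_def)

lemma assoc3: "f \<in> hom S A B \<Longrightarrow> g \<in> hom S B C \<Longrightarrow> h \<in> hom S C D \<Longrightarrow>
   Comp S h (Comp S g f) = Comp S (Comp S h g) f"
  using comp_assoc by (simp add: hom_def)

lemma tens_comp': "f \<in> hom S A B \<Longrightarrow> g \<in> hom S B C \<Longrightarrow> f' \<in> hom S A' B' \<Longrightarrow> g' \<in> hom S B' C' \<Longrightarrow>
   TensM S (Comp S g f) (Comp S g' f') = Comp S (TensM S g g') (TensM S f f')"
  using tens_comp by (simp add: hom_def)

lemma idl: "f \<in> hom S A B \<Longrightarrow> Comp S (Id S B) f = f"
  using comp_id_left[of f] by (auto simp: hom_def)

lemma idr: "f \<in> hom S A B \<Longrightarrow> Comp S f (Id S A) = f"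
  using comp_id_right[of f] by (auto simp: hom_def)

lemma lunit_inv: assumes "E \<in> Ob S"
  obtains g where "g \<in> hom S E (TensO S (Unit S) E)"
    "Comp S g (LUnit S E) = Id S (TensO S (Unit S) E)" "Comp S (LUnit S E) g = Id S E"
  using lunit_iso[OF assms] lunit_hom[OF assms] unfolding is_iso_def hom_def by auto

lemma lunit_cancel: assumes "E \<in> Ob S" "z \<in> hom S A (TensO S (Unit S) E)"
   "w \<in> hom S A (TensO S (Unit S) E)" "Comp S (LUnit S E) z = Comp S (LUnit S E) w"
  shows "z = w"
proof -
  obtain g where g: "g \<in> hom S E (TensO S (Unit S) E)"
    "Comp S g (LUnit S E) = Id S (TensO S (Unit S) E)" "Comp S (LUnit S E) g = Id S E"
    using lunit_inv[OF assms(1)] by blast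
  have L: "LUnit S E \<in> hom S (TensO S (Unit S) E) E" using lunit_hom assms(1) by blast
  have "z = Comp S g (Comp S (LUnit S E) z)"
    using assoc3[OF assms(2) L g(1)] g(2) idl[OF assms(2)] by simp
  also have "\<dots> = Comp S g (Comp S (LUnit S E) w)" using assms(4) by simp
  also have "\<dots> = w"
    using assoc3[OF assms(3) L g(1)] g(2) idl[OF assms(3)] by simp
  finally show ?thesis .
qed

end

theorem proposition4p18:
  fixes S :: "('o, 'm, 'z) smc_data_scheme" and X :: 'o
  assumes "semicartesian_smc S"
    and "X \<in> Ob S"
  shows "admits_broadcasting S X \<longleftrightarrow> non_creative S (del S X)"
proof -
  interpret semicartesian_smc S by fact
  have X: "X \<in> Ob S" by fact
  have dX: "del S X \<in> hom S X (Unit S)" using del_hom X by blast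
  have IdX: "Id S X \<in> hom S X X" using id_hom X by blast
  have U: "Unit S \<in> Ob S" by (rule unit_ob)
  have IdU: "Id S (Unit S) \<in> hom S (Unit S) (Unit S)" using id_hom U by blast
  have LX: "LUnit S X \<in> hom S (TensO S (Unit S) X) X" using lunit_hom X by blast
  have dXm: "del S X \<in> Mor S" "Dom S (del S X) = X" "Cod S (del S X) = Unit S"
    using dX by (auto simp: hom_def)
  show ?thesis
  proof
    assume "admits_broadcasting S X"
    then obtain b where b: "b \<in> hom S X (TensO S X X)"
      "Comp S (RUnit S X) (Comp S (TensM S (Id S X) (del S X)) b) = Id S X"
      "Comp S (LUnit S X) (Comp S (TensM S (del S X) (Id S X)) b) = Id S X"
      unfolding admits_broadcasting_def by blast
    show "non_creative S (del S X)"
      unfolding non_creative_def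
    proof (intro conjI ballI allI impI)
      show "del S X \<in> Mor S" by (rule dXm)
      fix E \<pi> assume E: "E \<in> Ob S" and dil: "dilation S (del S X) E \<pi>"
      have pi: "\<pi> \<in> hom S X (TensO S (Unit S) E)" using dil dXm unfolding dilation_def by simp
      have LE: "LUnit S E \<in> hom S (TensO S (Unit S) E) E" using lunit_hom E by blast
      have IdE: "Id S E \<in> hom S E E" using id_hom E by blast
      have dE: "del S E \<in> hom S E (Unit S)" using del_hom E by blast
      define f where "f = Comp S (LUnit S E) \<pi>"
      have f: "f \<in> hom S X E" unfolding f_def using comp_in[OF pi LE] .
      define \<iota> where "\<iota> = Comp S (TensM S (Id S X) f) b"
      have T1: "TensM S (Id S X) f \<in> hom S (TensO S X X) (TensO S X E)" using tens_in[OF IdX f] .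
      have iota: "\<iota> \<in> hom S X (TensO S X E)" unfolding \<iota>_def using comp_in[OF b(1) T1] .
      have T2: "TensM S (Id S X) (del S E) \<in> hom S (TensO S X E) (TensO S X (Unit S))"
        using tens_in[OF IdX dE] .
      have dEf: "Comp S (del S E) f = del S X" using del_unique[OF X comp_in[OF f dE]] .
      have "Comp S (TensM S (Id S X) (del S E)) \<iota> = Comp S (TensM S (Id S X) (del S X)) b"
      proof -
        have "Comp S (TensM S (Id S X) (del S E)) \<iota>
            = Comp S (Comp S (TensM S (Id S X) (del S E)) (TensM S (Id S X) f)) b"
          unfolding \<iota>_def using assoc3[OF b(1) T1 T2] .
        also have "\<dots> = Comp S (TensM S (Comp S (Id S X) (Id S X)) (Comp S (del S E) f)) b"
          using tens_comp'[OF IdX IdX f dE] by simp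
        finally show ?thesis using dEf idl[OF IdX] by simp
      qed
      hence dil2: "dilation S (Id S (Dom S (del S X))) E \<iota>"
        unfolding dilation_def using IdX E iota b(2) dXm by (simp add: hom_def)
      have TdI: "TensM S (del S X) (Id S E) \<in> hom S (TensO S X E) (TensO S (Unit S) E)"
        using tens_in[OF dX IdE] .
      have c: "Comp S (TensM S (del S X) (Id S X)) b \<in> hom S X (TensO S (Unit S) X)"
        using comp_in[OF b(1) tens_in[OF dX IdX]] .
      have TIf: "TensM S (Id S (Unit S)) f \<in> hom S (TensO S (Unit S) X) (TensO S (Unit S) E)"
        using tens_in[OF IdU f] .
      have eq1: "Comp S (TensM S (del S X) (Id S E)) \<iota>
          = Comp S (TensM S (Id S (Unit S)) f) (Comp S (TensM S (del S X) (Id S X)) b)"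
      proof -
        have "Comp S (TensM S (del S X) (Id S E)) \<iota>
            = Comp S (Comp S (TensM S (del S X) (Id S E)) (TensM S (Id S X) f)) b"
          unfolding \<iota>_def using assoc3[OF b(1) T1 TdI] .
        also have "\<dots> = Comp S (TensM S (Comp S (del S X) (Id S X)) (Comp S (Id S E) f)) b"
          using tens_comp'[OF IdX dX f IdE] by simp
        also have "\<dots> = Comp S (TensM S (Comp S (Id S (Unit S)) (del S X)) (Comp S f (Id S X))) b"
          using idl[OF dX] idr[OF dX] idl[OF f] idr[OF f] by simp
        also have "\<dots> = Comp S (Comp S (TensM S (Id S (Unit S)) f) (TensM S (del S X) (Id S X))) b"
          using tens_comp'[OF dX IdU IdX f] by simp
        also have "\<dots> = Comp S (TensM S (Id S (Unit S)) f) (Comp S (TensM S (del S X) (Id S X)) b)"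
          using assoc3[OF b(1) tens_in[OF dX IdX] TIf] by simp
        finally show ?thesis .
      qed
      have "Comp S (LUnit S E) (Comp S (TensM S (Id S (Unit S)) f) (Comp S (TensM S (del S X) (Id S X)) b))
          = Comp S (LUnit S E) \<pi>"
      proof -
        have ln: "Comp S (LUnit S E) (TensM S (Id S (Unit S)) f) = Comp S f (LUnit S X)"
          using lunit_nat[of f] f by (simp add: hom_def)
        have "Comp S (LUnit S E) (Comp S (TensM S (Id S (Unit S)) f) (Comp S (TensM S (del S X) (Id S X)) b))
           = Comp S (Comp S (LUnit S E) (TensM S (Id S (Unit S)) f)) (Comp S (TensM S (del S X) (Id S X)) b)"
          using assoc3[OF c TIf LE] .
        also have "\<dots> = Comp S f (Comp S (LUnit S X) (Comp S (TensM S (del S X) (Id S X)) b))"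
          using ln assoc3[OF c LX f] by simp
        also have "\<dots> = f" using b(3) idr[OF f] by simp
        finally show ?thesis unfolding f_def .
      qed
      hence "Comp S (TensM S (Id S (Unit S)) f) (Comp S (TensM S (del S X) (Id S X)) b) = \<pi>"
        using lunit_cancel[OF E comp_in[OF c TIf] pi] by blast
      with eq1 have "\<pi> = Comp S (TensM S (del S X) (Id S E)) \<iota>" by simp
      with dil2 show "\<exists>\<iota>. dilation S (Id S (Dom S (del S X))) E \<iota> \<and> \<pi> = Comp S (TensM S (del S X) (Id S E)) \<iota>"
        by blast
    qed
  next
    assume nc: "non_creative S (del S X)"
    obtain g where g: "g \<in> hom S X (TensO S (Unit S) X)"
      "Comp S g (LUnit S X) = Id S (TensO S (Unit S) X)" "Comp S (LUnit S X) g = Id S X"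
      using lunit_inv[OF X] by blast
    have "dilation S (del S X) X g"
      unfolding dilation_def
    proof (intro conjI)
      have RU: "RUnit S (Unit S) \<in> hom S (TensO S (Unit S) (Unit S)) (Unit S)" using runit_hom U by blast
      have "Comp S (RUnit S (Unit S)) (Comp S (TensM S (Id S (Unit S)) (del S X)) g) \<in> hom S X (Unit S)"
        using comp_in[OF comp_in[OF g(1) tens_in[OF IdU del_hom[OF X]]] RU] .
      hence "Comp S (RUnit S (Unit S)) (Comp S (TensM S (Id S (Unit S)) (del S X)) g) = del S X"
        by (rule del_unique[OF X])
      thus "Comp S (RUnit S (Cod S (del S X))) (Comp S (TensM S (Id S (Cod S (del S X))) (del S X)) g) = del S X"
        using dXm(3) by simp
    next
      show "del S X \<in> Mor S" by (rule dXm)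
    next
      show "X \<in> Ob S" by (rule X)
    next
      show "g \<in> hom S (Dom S (del S X)) (TensO S (Cod S (del S X)) X)" using g(1) dXm by simp
    qed
    with nc X obtain \<iota> where i: "dilation S (Id S (Dom S (del S X))) X \<iota>"
      "g = Comp S (TensM S (del S X) (Id S X)) \<iota>"
      unfolding non_creative_def by blast
    have IdXm: "Id S X \<in> Mor S" "Dom S (Id S X) = X" "Cod S (Id S X) = X" using IdX by (auto simp: hom_def)
    have i1: "\<iota> \<in> hom S X (TensO S X X)"
      and i2: "Comp S (RUnit S X) (Comp S (TensM S (Id S X) (del S X)) \<iota>) = Id S X"
      using i(1) IdXm dXm unfolding dilation_def by simp_all
    have i3: "Comp S (LUnit S X) (Comp S (TensM S (del S X) (Id S X)) \<iota>) = Id S X"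
      using g(3) i(2) by simp
    show "admits_broadcasting S X"
      unfolding admits_broadcasting_def using i1 i2 i3 by blast
  qed
qed

end
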